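(* Let $g(S) = w(S) := \sum_{v \in S} w(v)$ for nonnegative weights $w : V \to \mathbb{R}_{\ge 0}$. Let $d > 0$ and let $S_d^*$ be a maximum-weight independent set of the intersection graph $G_d(V)$ among those of size at most $k$. If $T$ is an output of $\mathrm{GreedyIndependentSet}(V,g,d',k)$ with $0 \le d' \le d/2$, then $w(T) \ge w(S_d^* )$.
   Context: Let $V$ be a finite set of points in a metric space with metric $\mathrm{dist}$. For $u \in V$ and $S \subseteq V$ let $\mathrm{dist}(u,S) = \min_{v \in S}\mathrm{dist}(u,v)$, with $\mathrm{dist}(u,\emptyset) = \infty$. For $d \ge 0$, the intersection graph $G_d(V)$ has vertex set $V$ and edge set $\{\{u,v\} : u \ne v,\ \mathrm{dist}(u,v) < d\}$; thus $S$ is an independent set of $G_d(V)$ iff $\mathrm{dist}(u,v) \ge d$ for all distinct $u,v \in S$. Let $k \ge 1$ be an integer. $\mathrm{GreedyIndependentSet}(V,g,d,k)$: initialize $S \gets \emptyset$; for $i = 1,\dots,k$: let $C = \{v \in V\setminus S : \mathrm{dist}(v,S) \ge d\}$; if $C = \emptyset$ return $S$; otherwise pick $t \in \arg\max_{v \in C} \big(g(S\cup\{v\}) - g(S)\big)$ (ties broken arbitrarily) and set $S \gets S \cup\{t\}$. After the loop, return $S$. *)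

theory Defs
  imports "HOL-Analysis.Analysis"
begin

text \<open>Independent set of the intersection graph G_d(V): pairwise distances at least d.\<close>
definition indep_set :: "'a::metric_space set \<Rightarrow> real \<Rightarrow> 'a set \<Rightarrow> bool" where
  "indep_set V d S \<longleftrightarrow> S \<subseteq> V \<and> (\<forall>u\<in>S. \<forall>v\<in>S. u \<noteq> v \<longrightarrow> dist u v \<ge> d)"

text \<open>Candidate set C = {v in V - S. dist(v,S) >= d}, with dist(v,{}) = infinity.\<close>
definition greedy_cand :: "'a::metric_space set \<Rightarrow> real \<Rightarrow> 'a set \<Rightarrow> 'a set" where
  "greedy_cand V d S = {v \<in> V - S. \<forall>u\<in>S. dist v u \<ge> d}"

text \<open>All possible results of running n remaining loop iterations from the current set S
  (ties broken arbitrarily, so the result is a set of possible outputs).\<close>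
fun greedy_from :: "'a::metric_space set \<Rightarrow> ('a set \<Rightarrow> real) \<Rightarrow> real \<Rightarrow> nat \<Rightarrow> 'a set \<Rightarrow> 'a set set" where
  "greedy_from V g d 0 S = {S}"
| "greedy_from V g d (Suc n) S =
     (let C = greedy_cand V d S in
      if C = {} then {S}
      else (\<Union>t \<in> {t \<in> C. \<forall>v\<in>C. g (S \<union> {v}) - g S \<le> g (S \<union> {t}) - g S}.
              greedy_from V g d n (insert t S)))"

definition greedy_outputs :: "'a::metric_space set \<Rightarrow> ('a set \<Rightarrow> real) \<Rightarrow> real \<Rightarrow> nat \<Rightarrow> 'a set set" where
  "greedy_outputs V g d k = greedy_from V g d k {}"

end

theory Submission
  imports Defs
begin

lemma main:
  fixes V :: "'a::metric_space set" and w :: "'a \<Rightarrow> real"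
  assumes fin: "finite V" and nn: "\<forall>v\<in>V. w v \<ge> 0" and dpos: "d > 0"
    and dd: "d' \<le> d / 2" and ind: "indep_set V d Sstar"
  shows "S \<subseteq> V \<Longrightarrow> T \<in> greedy_from V (\<lambda>S. \<Sum>v\<in>S. w v) d' n S
    \<Longrightarrow> B \<subseteq> Sstar \<inter> greedy_cand V d' S \<Longrightarrow> card B \<le> n
    \<Longrightarrow> sum w T \<ge> sum w S + sum w B"
proof (induction n arbitrary: S B)
  case 0
  then have "finite B" using fin ind unfolding indep_set_def by (meson finite_subset le_infI1)
  then have "B = {}" using 0 by simp
  then show ?case using 0 by simp
next
  case (Suc n)
  define C where "C = greedy_cand V d' S"
  have finS: "finite S" using Suc.prems(1) fin by (rule finite_subset)
  have SV: "Sstar \<subseteq> V" using ind unfolding indep_set_def by blast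
  show ?case
  proof (cases "C = {}")
    case True
    then have "T = S" using Suc.prems(2) by (simp add: C_def Let_def)
    moreover have "B = {}" using True Suc.prems(3) C_def by blast
    ultimately show ?thesis by simp
  next
    case False
    then obtain t where tC: "t \<in> C"
      and tmax: "\<forall>v\<in>C. sum w (S \<union> {v}) - sum w S \<le> sum w (S \<union> {t}) - sum w S"
      and TT: "T \<in> greedy_from V (\<lambda>S. \<Sum>v\<in>S. w v) d' n (insert t S)"
      using Suc.prems(2) by (auto simp add: C_def Let_def)
    have gain: "sum w (S \<union> {v}) - sum w S = w v" if "v \<in> C" for v
    proof -
      have "v \<notin> S" using that unfolding C_def greedy_cand_def by blast
      then show ?thesis using finS by simp
    qed
    have wmax: "\<forall>v\<in>C. w v \<le> w t"
    proof
      fix v assume "v \<in> C"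
      then have "sum w (S \<union> {v}) - sum w S \<le> sum w (S \<union> {t}) - sum w S" using tmax by blast
      then show "w v \<le> w t" using gain[OF \<open>v \<in> C\<close>] gain[OF tC] by linarith
    qed
    have tV: "t \<in> V" and tS: "t \<notin> S" using tC unfolding C_def greedy_cand_def by auto
    have sumins: "sum w (insert t S) = w t + sum w S" using finS tS by simp
    have S'V: "insert t S \<subseteq> V" using tV Suc.prems(1) by blast
    have "B \<subseteq> V" using Suc.prems(3) SV by blast
    then have finB: "finite B" using fin by (rule finite_subset)
    show ?thesis
    proof (cases "B = {}")
      case True
      have "sum w T \<ge> sum w (insert t S) + sum w {}"
        using Suc.IH[OF S'V TT, of "{}"] by simp
      moreover have "w t \<ge> 0" using nn tV by blast
      ultimately show ?thesis using True sumins by simp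
    next
      case Bne: False
      obtain s where sB: "s \<in> B" and rest: "B - {s} \<subseteq> Sstar \<inter> greedy_cand V d' (insert t S)"
      proof (cases "\<exists>s\<in>B. s = t \<or> dist s t < d'")
        case True
        then obtain s where sB: "s \<in> B" and st: "s = t \<or> dist s t < d'" by blast
        have "B - {s} \<subseteq> Sstar \<inter> greedy_cand V d' (insert t S)"
        proof
          fix b assume b: "b \<in> B - {s}"
          have bS: "b \<in> Sstar" "s \<in> Sstar" using b sB Suc.prems(3) by auto
          have "dist b s \<ge> d" using ind bS b unfolding indep_set_def by auto
          have "b \<noteq> t \<and> dist b t \<ge> d'"
          proof (rule ccontr)
            assume "\<not> (b \<noteq> t \<and> dist b t \<ge> d')"
            then have bt: "b = t \<or> dist b t < d'" by auto
            have "dist b s \<le> dist b t + dist s t" by (metis dist_commute dist_triangle)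
            moreover have "dist b t < d \<or> b = t" using bt dd dpos by auto
            moreover have "dist s t < d \<or> s = t" using st dd dpos by auto
            ultimately show False using bt st \<open>dist b s \<ge> d\<close> dd dpos b
              by (cases "b = t"; cases "s = t") (auto simp: dist_commute)
          qed
          then show "b \<in> Sstar \<inter> greedy_cand V d' (insert t S)"
            using b Suc.prems(3) unfolding greedy_cand_def by auto
        qed
        then show ?thesis using that sB by blast
      next
        case False
        obtain s where "s \<in> B" using Bne by blast
        moreover have "B - {s} \<subseteq> Sstar \<inter> greedy_cand V d' (insert t S)"
          using False Suc.prems(3) unfolding greedy_cand_def by (auto simp: dist_commute)
        ultimately show ?thesis using that by blast
      qed
      have cB: "card (B - {s}) \<le> n" using Suc.prems(4) sB finB by simp
      have IH: "sum w T \<ge> sum w (insert t S) + sum w (B - {s})"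
        using Suc.IH[OF S'V TT rest cB] .
      have "sum w B = w s + sum w (B - {s})" using finB sB by (simp add: sum.remove)
      moreover have "w s \<le> w t" using wmax sB Suc.prems(3) C_def by blast
      ultimately show ?thesis using IH sumins by linarith
    qed
  qed
qed

theorem lemmaC1:
  fixes V :: "'a::metric_space set" and w :: "'a \<Rightarrow> real"
    and d d' :: real and k :: nat and Sstar T :: "'a set"
  assumes "finite V"
    and "\<forall>v\<in>V. w v \<ge> 0"
    and "k \<ge> 1"
    and "d > 0"
    and "0 \<le> d'" and "d' \<le> d / 2"
    and "indep_set V d Sstar" and "card Sstar \<le> k"
    and "\<forall>S. indep_set V d S \<and> card S \<le> k \<longrightarrow> (\<Sum>v\<in>S. w v) \<le> (\<Sum>v\<in>Sstar. w v)"
    and "T \<in> greedy_outputs V (\<lambda>S. \<Sum>v\<in>S. w v) d' k"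
  shows "(\<Sum>v\<in>T. w v) \<ge> (\<Sum>v\<in>Sstar. w v)"
proof -
  have "Sstar \<subseteq> Sstar \<inter> greedy_cand V d' {}"
    using assms(7) unfolding indep_set_def greedy_cand_def by auto
  from main[OF assms(1,2,4,6,7) _ _ this assms(8)] assms(10)
  show ?thesis unfolding greedy_outputs_def by simp
qed

end
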